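(* Let $\mathcal{F}$ be a projective Fraïssé family of finite trees whose distinguished epimorphisms are monotone and weakly coherent, and which allows splitting edges. Let $(F_i)_{i<\omega}$ be a Fraïssé sequence for $\mathcal{F}$ and $\mathbb{F}=\varprojlim F_i\subseteq\prod_i F_i$ its projective Fraïssé limit. Let $e=(e_n)_{n\in\mathbb{N}}\in\mathbb{F}$. If there is $N$ such that $e_m$ is an endpoint of $F_m$ for every $m\ge N$, then $e$ is an endpoint of $\mathbb{F}$.
   Context: Graphs have reflexive symmetric edge relations; topological graphs carry a compact, Hausdorff, zero-dimensional, second countable topology with closed edge set; finite graphs are discrete. An epimorphism $g\colon B\to A$ is a continuous surjection with $\langle a_1,a_2\rangle\in E(A)$ iff some $b_i\in g^{-1}(a_i)$ satisfy $\langle b_1,b_2\rangle\in E(B)$. A topological graph is disconnected if its vertex set splits into two nonempty disjoint closed sets with no edges between, connected otherwise (subsets carry induced edges and subspace topology). Monotone: every fibre is connected. An arc is a connected topological graph such that removing any vertex except at most two (its endpoints) disconnects it. An embedding is an injective continuous map that is a homeomorphism onto its image and preserves and reflects edges. A vertex $x$ of a topological graph $G$ is an endpoint of $G$ if whenever $H$ is an arc and $f\colon H\to G$ an embedding with $x$ in the image, $x$ is the image of an endpoint of $H$ (for a finite tree these are the vertices with at most one neighbour). In a finite tree, $\mathrm{ord}(a)$ is the number of neighbours other than $a$. For monotone $f\colon B\to A$ of finite trees, $a\in A$ with $\mathrm{ord}(a)=n\ge3$ is a point of weak coherence if some $b\in f^{-1}(a)$ with $\mathrm{ord}(b)=m\ge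 n$ and an injection $p\colon n\to m$ satisfy $f^{-1}(A_i)\subseteq B_{p(i)}$ ($A_i$, $B_j$ the components of $A\setminus\{a\}$, $B\setminus\{b\}$); $f$ is weakly coherent if this holds at every vertex of order $\ge3$. A projective Fraïssé family: class of finite graphs with distinguished epimorphisms, countably many up to isomorphism, containing identities, closed under composition, with joint projection and projective amalgamation. A Fraïssé sequence: compatible distinguished epimorphisms $f^m_n\colon F_m\to F_n$ such that each member is the image of some $F_n$, and every distinguished $f\colon A\to F_m$ satisfies $f\circ g=f^n_m$ for some $n\ge m$ and distinguished $g\colon F_n\to A$; the limit is the inverse limit with coordinatewise edges. Allowing splitting edges: for each member $G$ and nontrivial edge $\{a,b\}$, replacing it by a path $a,\ast,b$ with a new vertex yields a member, and the two maps collapsing $\ast$ to $a$, resp. $b$, are distinguished. *)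

theory Defs
  imports "HOL-Analysis.Analysis"
begin

definition tgraph :: "'v topology \<Rightarrow> ('v \<Rightarrow> 'v \<Rightarrow> bool) \<Rightarrow> bool" where
  "tgraph T E \<longleftrightarrow>
     (\<forall>x y. E x y \<longrightarrow> x \<in> topspace T \<and> y \<in> topspace T) \<and>
     (\<forall>x\<in>topspace T. E x x) \<and>
     (\<forall>x y. E x y \<longrightarrow> E y x) \<and>
     closedin (prod_topology T T) {(x, y). E x y} \<and>
     compact_space T \<and> Hausdorff_space T \<and> T dim_le 0 \<and> second_countable T"

definition gconnected :: "'v topology \<Rightarrow> ('v \<Rightarrow> 'v \<Rightarrow> bool) \<Rightarrow> 'v set \<Rightarrow> bool" where
  "gconnected T E S \<longleftrightarrow>
     \<not> (\<exists>U W. U \<noteq> {} \<and> W \<noteq> {} \<and> U \<inter> W = {} \<and> U \<union> W = S \<and>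
              closedin (subtopology T S) U \<and> closedin (subtopology T S) W \<and>
              \<not> (\<exists>u\<in>U. \<exists>w\<in>W. E u w))"

definition arc_endpoints :: "'v topology \<Rightarrow> ('v \<Rightarrow> 'v \<Rightarrow> bool) \<Rightarrow> 'v set" where
  "arc_endpoints T E = {v \<in> topspace T. gconnected T E (topspace T - {v})}"

definition is_arc :: "'v topology \<Rightarrow> ('v \<Rightarrow> 'v \<Rightarrow> bool) \<Rightarrow> bool" where
  "is_arc T E \<longleftrightarrow> tgraph T E \<and> gconnected T E (topspace T) \<and>
     finite (arc_endpoints T E) \<and> card (arc_endpoints T E) \<le> 2"

definition graph_embedding ::
  "'w topology \<Rightarrow> ('w \<Rightarrow> 'w \<Rightarrow> bool) \<Rightarrow> 'v topology \<Rightarrow> ('v \<Rightarrow> 'v \<Rightarrow> bool) \<Rightarrow> ('w \<Rightarrow> 'v) \<Rightarrow> bool" where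
  "graph_embedding TH EH TG EG h \<longleftrightarrow>
     inj_on h (topspace TH) \<and> embedding_map TH TG h \<and>
     (\<forall>x\<in>topspace TH. \<forall>y\<in>topspace TH. EH x y \<longleftrightarrow> EG (h x) (h y))"

text \<open>Endpoint of a topological graph. Arcs H are quantified over an arbitrary vertex type 'w,
  which is selected by the TYPE argument.\<close>

definition endpoint_of :: "'w itself \<Rightarrow> 'v topology \<Rightarrow> ('v \<Rightarrow> 'v \<Rightarrow> bool) \<Rightarrow> 'v \<Rightarrow> bool" where
  "endpoint_of _ TG EG x \<longleftrightarrow> x \<in> topspace TG \<and>
     (\<forall>(TH :: 'w topology) EH h.
        is_arc TH EH \<and> graph_embedding TH EH TG EG h \<and> x \<in> h ` topspace TH
        \<longrightarrow> (\<exists>v\<in>arc_endpoints TH EH. h v = x))"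

type_synonym 'a graph = "'a set \<times> ('a \<Rightarrow> 'a \<Rightarrow> bool)"

abbreviation V :: "'a graph \<Rightarrow> 'a set" where "V G \<equiv> fst G"
abbreviation Ed :: "'a graph \<Rightarrow> 'a \<Rightarrow> 'a \<Rightarrow> bool" where "Ed G \<equiv> snd G"
abbreviation top_of :: "'a graph \<Rightarrow> 'a topology" where "top_of G \<equiv> discrete_topology (V G)"

definition finite_graph :: "'a graph \<Rightarrow> bool" where
  "finite_graph G \<longleftrightarrow> finite (V G) \<and>
     (\<forall>x y. Ed G x y \<longrightarrow> x \<in> V G \<and> y \<in> V G) \<and>
     (\<forall>x\<in>V G. Ed G x x) \<and> (\<forall>x y. Ed G x y \<longrightarrow> Ed G y x)"

definition fconnected :: "'a graph \<Rightarrow> 'a set \<Rightarrow> bool" where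
  "fconnected G S \<longleftrightarrow> gconnected (top_of G) (Ed G) S"

definition has_cycle :: "'a graph \<Rightarrow> bool" where
  "has_cycle G \<longleftrightarrow> (\<exists>cs. length cs \<ge> 3 \<and> distinct cs \<and> set cs \<subseteq> V G \<and>
      (\<forall>i. Suc i < length cs \<longrightarrow> Ed G (cs ! i) (cs ! Suc i)) \<and>
      Ed G (last cs) (hd cs))"

definition finite_tree :: "'a graph \<Rightarrow> bool" where
  "finite_tree G \<longleftrightarrow> finite_graph G \<and> V G \<noteq> {} \<and> fconnected G (V G) \<and> \<not> has_cycle G"

definition epi :: "'a graph \<Rightarrow> 'a graph \<Rightarrow> ('a \<Rightarrow> 'a) \<Rightarrow> bool" where
  "epi B A f \<longleftrightarrow> f ` V B = V A \<and>
     (\<forall>a1\<in>V A. \<forall>a2\<in>V A. Ed A a1 a2 \<longleftrightarrow>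
        (\<exists>b1\<in>V B. \<exists>b2\<in>V B. f b1 = a1 \<and> f b2 = a2 \<and> Ed B b1 b2))"

definition graph_iso :: "'a graph \<Rightarrow> 'a graph \<Rightarrow> bool" where
  "graph_iso G H \<longleftrightarrow> (\<exists>h. bij_betw h (V G) (V H) \<and>
     (\<forall>x\<in>V G. \<forall>y\<in>V G. Ed G x y \<longleftrightarrow> Ed H (h x) (h y)))"

definition preim :: "'a graph \<Rightarrow> ('a \<Rightarrow> 'a) \<Rightarrow> 'a set \<Rightarrow> 'a set" where
  "preim B f C = {x \<in> V B. f x \<in> C}"

definition monotone_epi :: "'a graph \<Rightarrow> 'a graph \<Rightarrow> ('a \<Rightarrow> 'a) \<Rightarrow> bool" where
  "monotone_epi B A f \<longleftrightarrow> (\<forall>a\<in>V A. fconnected B (preim B f {a}))"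

definition components :: "'a graph \<Rightarrow> 'a set \<Rightarrow> 'a set set" where
  "components G S = {C. C \<noteq> {} \<and> C \<subseteq> S \<and> fconnected G C \<and>
     (\<forall>C'. C \<subseteq> C' \<and> C' \<subseteq> S \<and> fconnected G C' \<longrightarrow> C' = C)}"

definition ord :: "'a graph \<Rightarrow> 'a \<Rightarrow> nat" where
  "ord G a = card {b \<in> V G. b \<noteq> a \<and> Ed G a b}"

definition weak_coherence_point :: "'a graph \<Rightarrow> 'a graph \<Rightarrow> ('a \<Rightarrow> 'a) \<Rightarrow> 'a \<Rightarrow> bool" where
  "weak_coherence_point B A f a \<longleftrightarrow>
     (\<exists>b\<in>preim B f {a}. ord B b \<ge> ord A a \<and>
        (\<exists>p. inj_on p (components A (V A - {a})) \<and>
             p ` components A (V A - {a}) \<subseteq> components B (V B - {b}) \<and>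
             (\<forall>C\<in>components A (V A - {a}). preim B f C \<subseteq> p C)))"

definition weakly_coherent :: "'a graph \<Rightarrow> 'a graph \<Rightarrow> ('a \<Rightarrow> 'a) \<Rightarrow> bool" where
  "weakly_coherent B A f \<longleftrightarrow>
     (\<forall>a\<in>V A. ord A a \<ge> 3 \<longrightarrow> weak_coherence_point B A f a)"

text \<open>A family is given by its class of members Fam and the predicate D B A f
  ("f : B \<rightarrow> A is a distinguished epimorphism").\<close>

definition proj_fraisse_family :: "'a graph set \<Rightarrow> ('a graph \<Rightarrow> 'a graph \<Rightarrow> ('a \<Rightarrow> 'a) \<Rightarrow> bool) \<Rightarrow> bool" where
  "proj_fraisse_family Fam D \<longleftrightarrow>
     (\<forall>G\<in>Fam. finite_graph G) \<and>
     (\<forall>B A f. D B A f \<longrightarrow> B \<in> Fam \<and> A \<in> Fam \<and> epi B A f) \<and>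
     (\<forall>B A f g. D B A f \<and> (\<forall>x\<in>V B. f x = g x) \<longrightarrow> D B A g) \<and>
     (\<exists>S. S \<subseteq> Fam \<and> countable S \<and> (\<forall>G\<in>Fam. \<exists>H\<in>S. graph_iso G H)) \<and>
     (\<forall>G\<in>Fam. D G G id) \<and>
     (\<forall>C B A f g. D C B g \<and> D B A f \<longrightarrow> D C A (f \<circ> g)) \<and>
     (\<forall>A\<in>Fam. \<forall>B\<in>Fam. \<exists>C\<in>Fam. \<exists>f g. D C A f \<and> D C B g) \<and>
     (\<forall>A B C f g. D B A f \<and> D C A g \<longrightarrow>
        (\<exists>E\<in>Fam. \<exists>f' g'. D E B f' \<and> D E C g' \<and> (\<forall>x\<in>V E. f (f' x) = g (g' x))))"

definition split_graph :: "'a graph \<Rightarrow> 'a \<Rightarrow> 'a \<Rightarrow> 'a \<Rightarrow> 'a graph" where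
  "split_graph G a b s =
     (insert s (V G),
      \<lambda>x y. (x \<in> V G \<and> y \<in> V G \<and> Ed G x y \<and> \<not> ((x = a \<and> y = b) \<or> (x = b \<and> y = a))) \<or>
            (x = s \<and> y = s) \<or>
            (x = a \<and> y = s) \<or> (x = s \<and> y = a) \<or>
            (x = b \<and> y = s) \<or> (x = s \<and> y = b))"

definition allows_splitting_edges ::
  "'a graph set \<Rightarrow> ('a graph \<Rightarrow> 'a graph \<Rightarrow> ('a \<Rightarrow> 'a) \<Rightarrow> bool) \<Rightarrow> bool" where
  "allows_splitting_edges Fam D \<longleftrightarrow>
     (\<forall>G\<in>Fam. \<forall>a\<in>V G. \<forall>b\<in>V G. a \<noteq> b \<and> Ed G a b \<longrightarrow>
        (\<exists>s. s \<notin> V G \<and> split_graph G a b s \<in> Fam \<and>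
             D (split_graph G a b s) G (\<lambda>x. if x = s then a else x) \<and>
             D (split_graph G a b s) G (\<lambda>x. if x = s then b else x)))"

definition fraisse_sequence ::
  "'a graph set \<Rightarrow> ('a graph \<Rightarrow> 'a graph \<Rightarrow> ('a \<Rightarrow> 'a) \<Rightarrow> bool) \<Rightarrow>
   (nat \<Rightarrow> 'a graph) \<Rightarrow> (nat \<Rightarrow> nat \<Rightarrow> 'a \<Rightarrow> 'a) \<Rightarrow> bool" where
  "fraisse_sequence Fam D F fs \<longleftrightarrow>
     (\<forall>n. F n \<in> Fam) \<and>
     (\<forall>m n. n \<le> m \<longrightarrow> D (F m) (F n) (fs m n)) \<and>
     (\<forall>n. \<forall>x\<in>V (F n). fs n n x = x) \<and>
     (\<forall>k n m. k \<le> n \<and> n \<le> m \<longrightarrow> (\<forall>x\<in>V (F m). fs n k (fs m n x) = fs m k x)) \<and>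
     (\<forall>A\<in>Fam. \<exists>n f. D (F n) A f) \<and>
     (\<forall>m A f. D A (F m) f \<longrightarrow>
        (\<exists>n\<ge>m. \<exists>g. D (F n) A g \<and> (\<forall>x\<in>V (F n). f (g x) = fs n m x)))"

definition limit_set :: "(nat \<Rightarrow> 'a graph) \<Rightarrow> (nat \<Rightarrow> nat \<Rightarrow> 'a \<Rightarrow> 'a) \<Rightarrow> (nat \<Rightarrow> 'a) set" where
  "limit_set F fs = {x. (\<forall>n. x n \<in> V (F n)) \<and> (\<forall>m n. n \<le> m \<longrightarrow> fs m n (x m) = x n)}"

definition limit_top :: "(nat \<Rightarrow> 'a graph) \<Rightarrow> (nat \<Rightarrow> nat \<Rightarrow> 'a \<Rightarrow> 'a) \<Rightarrow> (nat \<Rightarrow> 'a) topology" where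
  "limit_top F fs = subtopology (product_topology (\<lambda>n. top_of (F n)) UNIV) (limit_set F fs)"

definition limit_edge :: "(nat \<Rightarrow> 'a graph) \<Rightarrow> (nat \<Rightarrow> nat \<Rightarrow> 'a \<Rightarrow> 'a) \<Rightarrow> (nat \<Rightarrow> 'a) \<Rightarrow> (nat \<Rightarrow> 'a) \<Rightarrow> bool" where
  "limit_edge F fs x y \<longleftrightarrow> x \<in> limit_set F fs \<and> y \<in> limit_set F fs \<and> (\<forall>n. Ed (F n) (x n) (y n))"

end

theory Submission
  imports Defs
begin

lemma fconn_edge:
  assumes "fconnected G S" "S \<subseteq> V G" "P \<subseteq> S" "P \<noteq> {}" "S - P \<noteq> {}"
  shows "\<exists>x\<in>P. \<exists>y\<in>S-P. Ed G x y"
proof (rule ccontr)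
  assume "\<not> ?thesis"
  then have "\<exists>U W. U \<noteq> {} \<and> W \<noteq> {} \<and> U \<inter> W = {} \<and> U \<union> W = S \<and>
              closedin (subtopology (top_of G) S) U \<and> closedin (subtopology (top_of G) S) W \<and>
              \<not> (\<exists>u\<in>U. \<exists>w\<in>W. Ed G u w)"
    using assms by (intro exI[of _ P] exI[of _ "S - P"]) auto
  then show False using assms(1) unfolding fconnected_def gconnected_def by blast
qed

definition pth :: "'a graph \<Rightarrow> 'a set \<Rightarrow> 'a list \<Rightarrow> bool" where
  "pth G S ps \<longleftrightarrow> ps \<noteq> [] \<and> distinct ps \<and> set ps \<subseteq> S \<and> successively (Ed G) ps"

lemma pth_extend:
  assumes "pth G S ps" "Ed G (last ps) w" "w \<in> S"
  shows "\<exists>qs. pth G S qs \<and> hd qs = hd ps \<and> last qs = w"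
proof (cases "w \<in> set ps")
  case True
  then obtain i where i: "i < length ps" "ps ! i = w" by (auto simp: in_set_conv_nth)
  let ?qs = "take (Suc i) ps"
  have "successively (Ed G) ?qs"
    using assms(1) unfolding pth_def successively_conv_nth by auto
  moreover have "hd ?qs = hd ps" using assms(1) by (simp add: pth_def hd_take)
  moreover have "last ?qs = w" proof -
    have "take (Suc i) ps \<noteq> []" using i by (cases ps) auto
    then show ?thesis using i by (simp add: last_conv_nth min_def, intro impI, subgoal_tac "length ps = Suc i", auto)
  qed
  moreover have "set ?qs \<subseteq> S" using assms(1) set_take_subset[of "Suc i" ps] by (auto simp: pth_def)
  ultimately show ?thesis using assms(1) unfolding pth_def by (intro exI[of _ ?qs]) auto
next
  case False
  let ?qs = "ps @ [w]"
  have "successively (Ed G) ?qs"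
    using assms(1,2) unfolding pth_def by (simp add: successively_append_iff)
  then show ?thesis using assms False unfolding pth_def by (intro exI[of _ ?qs]) auto
qed

lemma fconn_path:
  assumes "fconnected G S" "S \<subseteq> V G" "x \<in> S" "y \<in> S"
  shows "\<exists>ps. pth G S ps \<and> hd ps = x \<and> last ps = y"
proof -
  define R where "R = {z \<in> S. \<exists>ps. pth G S ps \<and> hd ps = x \<and> last ps = z}"
  have xR: "x \<in> R" unfolding R_def pth_def using assms by (intro CollectI conjI exI[of _ "[x]"]) auto
  have "S - R = {}"
  proof (rule ccontr)
    assume "S - R \<noteq> {}"
    moreover have "R \<subseteq> S" by (auto simp: R_def)
    ultimately obtain z w where z: "z \<in> R" and w: "w \<in> S - R" and zw: "Ed G z w"
      using fconn_edge[OF assms(1,2), of R] xR by blast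
    then obtain ps where ps: "pth G S ps" "hd ps = x" "last ps = z" unfolding R_def by auto
    obtain qs where "pth G S qs \<and> hd qs = hd ps \<and> last qs = w"
      using pth_extend[of G S ps w] ps zw w by auto
    then have "w \<in> R" using w ps unfolding R_def by auto
    then show False using w by auto
  qed
  then show ?thesis using assms(4) unfolding R_def by auto
qed

lemma tree_unique_edge:
  assumes T: "finite_tree G" and P: "P \<subseteq> V G" and Q: "Q \<subseteq> V G" and PQ: "P \<inter> Q = {}"
    and cP: "fconnected G P" and cQ: "fconnected G Q"
    and x: "x \<in> P" "x' \<in> P" and y: "y \<in> Q" "y' \<in> Q"
    and e: "Ed G x y" "Ed G x' y'"
  shows "y = y'"
proof (rule ccontr)
  assume ne: "y \<noteq> y'"
  obtain ps where ps: "pth G P ps" "hd ps = x'" "last ps = x" using fconn_path[OF cP P x(2) x(1)] by auto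
  obtain qs where qs: "pth G Q qs" "hd qs = y" "last qs = y'" using fconn_path[OF cQ Q y] by auto
  have sym: "\<And>a b. Ed G a b \<Longrightarrow> Ed G b a" using T by (auto simp: finite_tree_def finite_graph_def)
  have "length qs \<noteq> 1" using qs ne by (cases qs) auto
  then have lq: "length qs \<ge> 2" using qs by (cases qs) (auto simp: pth_def Suc_le_eq)
  have lp: "length ps \<ge> 1" using ps by (cases ps) (auto simp: pth_def)
  let ?cs = "ps @ qs"
  have "length ?cs \<ge> 3" using lq lp by simp
  moreover have "distinct ?cs" using ps qs PQ by (auto simp: pth_def)
  moreover have "set ?cs \<subseteq> V G" using ps qs P Q by (auto simp: pth_def)
  moreover have "successively (Ed G) ?cs" using ps qs e by (auto simp: pth_def successively_append_iff)
  moreover have "Ed G (last ?cs) (hd ?cs)" using ps qs e sym by (auto simp: pth_def)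
  ultimately have "has_cycle G" unfolding has_cycle_def successively_conv_nth by blast
  then show False using T by (simp add: finite_tree_def)
qed

lemma cross_one:
  assumes ep: "epi G A f" and S: "S \<subseteq> V G" "fconnected G S" and a: "a \<in> S" "f a = c"
    and b: "b \<in> S" "f b \<noteq> c" and leaf: "\<forall>z\<in>V A. z \<noteq> c \<and> Ed A c z \<longrightarrow> z = nn"
  shows "\<exists>x\<in>S. \<exists>y\<in>S. f x = c \<and> f y = nn \<and> nn \<noteq> c \<and> Ed G x y"
proof -
  obtain x y where x: "x \<in> S \<inter> preim G f {c}" and y: "y \<in> S - (S \<inter> preim G f {c})" and xy: "Ed G x y"
    using fconn_edge[OF S(2) S(1), of "S \<inter> preim G f {c}"] a b S(1) by (auto simp: preim_def)
  have xv: "x \<in> V G" "y \<in> V G" using x y S(1) by auto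
  have img: "f x \<in> V A" "f y \<in> V A" using ep xv by (auto simp: epi_def)
  have "Ed A (f x) (f y)" using ep img xv xy unfolding epi_def by blast
  moreover have "f x = c" "f y \<noteq> c" using x y xv by (auto simp: preim_def)
  ultimately have "f y = nn" using leaf img by auto
  then show ?thesis using x y xy \<open>f x = c\<close> \<open>f y \<noteq> c\<close> by auto
qed

lemma cross:
  assumes G: "finite_tree G" and ep: "epi G A f" and mo: "monotone_epi G A f"
    and c: "c \<in> V A" and leaf: "\<forall>z\<in>V A. z \<noteq> c \<and> Ed A c z \<longrightarrow> z = nn"
    and S: "S \<subseteq> V G" "fconnected G S" and a: "a \<in> S" "f a = c" and b: "b \<in> S" "f b \<noteq> c"
    and T: "T \<subseteq> V G" "fconnected G T" and a': "a' \<in> T" "f a' = c" and b': "b' \<in> T" "f b' \<noteq> c"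
  shows "\<exists>q\<in>S \<inter> T. f q = nn"
proof -
  obtain x y where xy: "x \<in> S" "y \<in> S" "f x = c" "f y = nn" "nn \<noteq> c" "Ed G x y"
    using cross_one[OF ep S a b leaf] by blast
  obtain x' y' where xy': "x' \<in> T" "y' \<in> T" "f x' = c" "f y' = nn" "Ed G x' y'"
    using cross_one[OF ep T a' b' leaf] by blast
  have nnV: "nn \<in> V A" using xy S(1) ep by (auto simp: epi_def)
  have "y = y'"
  proof (rule tree_unique_edge[OF G, of "preim G f {c}" "preim G f {nn}"])
    show "fconnected G (preim G f {c})" "fconnected G (preim G f {nn})"
      using mo c nnV by (auto simp: monotone_epi_def)
  qed (use xy xy' S T in \<open>auto simp: preim_def\<close>)
  then show ?thesis using xy xy' by auto
qed

lemma leaf: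
  fixes G :: "'a graph"
  assumes G: "finite_tree G" and c: "c \<in> V G" and ep: "endpoint_of TYPE('a) (top_of G) (Ed G) c"
    and ab: "a \<in> V G" "b \<in> V G" "a \<noteq> c" "b \<noteq> c" "Ed G c a" "Ed G c b"
  shows "a = b"
proof (rule ccontr)
  assume ne: "a \<noteq> b"
  have fg: "finite_graph G" using G by (simp add: finite_tree_def)
  have sym: "\<And>x y. Ed G x y \<Longrightarrow> Ed G y x" and refl: "\<And>x. x \<in> V G \<Longrightarrow> Ed G x x"
    using fg by (auto simp: finite_graph_def)
  have nab: "\<not> Ed G a b"
  proof
    assume "Ed G a b"
    have "has_cycle G" unfolding has_cycle_def successively_conv_nth[symmetric]
      by (rule exI[of _ "[a,c,b]"]) (use ne ab c \<open>Ed G a b\<close> sym in simp)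
    then show False using G by (simp add: finite_tree_def)
  qed
  define S where "S = {a, c, b}"
  define TH where "TH = discrete_topology S"
  define EH where "EH = (\<lambda>x y. x \<in> S \<and> y \<in> S \<and> Ed G x y)"
  have SV: "S \<subseteq> V G" using ab c by (auto simp: S_def)
  have tg: "tgraph TH EH"
    unfolding tgraph_def TH_def EH_def
  proof (intro conjI)
    show "closedin (prod_topology (discrete_topology S) (discrete_topology S)) {(x, y). x \<in> S \<and> y \<in> S \<and> Ed G x y}"
      by (auto simp flip: prod_topology_discrete_topology)
    show "compact_space (discrete_topology S)" by (simp add: compact_space_discrete_topology S_def)
    show "second_countable (discrete_topology S)" by (simp add: second_countable_discrete_topology S_def)
  qed (use SV refl sym in auto)
  have conn: "gconnected TH EH (topspace TH)"
    unfolding gconnected_def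
  proof clarify
    fix U W assume UW: "U \<noteq> {}" "W \<noteq> {}" "U \<inter> W = {}" "U \<union> W = topspace TH"
      "\<not> (\<exists>u\<in>U. \<exists>w\<in>W. EH u w)"
    have ts: "topspace TH = S" by (simp add: TH_def)
    have ea: "EH c a" "EH a c" "EH c b" "EH b c" using ab sym by (auto simp: EH_def S_def)
    show False
    proof (cases "c \<in> U")
      case True
      then have "W \<subseteq> {a, b}" using UW ts by (auto simp: S_def)
      then show ?thesis using UW True ea by blast
    next
      case False
      then have "c \<in> W" using UW ts by (auto simp: S_def)
      moreover have "U \<subseteq> {a, b}" using UW ts False by (auto simp: S_def)
      ultimately show ?thesis using UW ea by blast
    qed
  qed
  have cnot: "c \<notin> arc_endpoints TH EH"
  proof
    assume "c \<in> arc_endpoints TH EH"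
    then have g: "gconnected TH EH (S - {c})" by (simp add: arc_endpoints_def TH_def)
    have "S - {c} = {a, b}" using ab by (auto simp: S_def)
    moreover have "\<not> EH a b" "\<not> EH b a" using nab sym by (auto simp: EH_def)
    moreover have "closedin (subtopology TH (S - {c})) {a}" "closedin (subtopology TH (S - {c})) {b}"
      using ab unfolding TH_def S_def by auto
    ultimately have "\<exists>U W. U \<noteq> {} \<and> W \<noteq> {} \<and> U \<inter> W = {} \<and> U \<union> W = S - {c} \<and>
              closedin (subtopology TH (S - {c})) U \<and> closedin (subtopology TH (S - {c})) W \<and>
              \<not> (\<exists>u\<in>U. \<exists>w\<in>W. EH u w)"
      using ne by (intro exI[of _ "{a}"] exI[of _ "{b}"]) simp
    then show False using g unfolding gconnected_def by blast
  qed
  have "arc_endpoints TH EH \<subseteq> {a, b}"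
    using cnot by (auto simp: arc_endpoints_def TH_def S_def)
  then have arc: "is_arc TH EH"
    unfolding is_arc_def using tg conn card_mono[of "{a,b}" "arc_endpoints TH EH"] ne
    by (auto intro: finite_subset)
  have emb: "graph_embedding TH EH (top_of G) (Ed G) id"
    unfolding graph_embedding_def embedding_map_def TH_def EH_def
    using SV by (auto simp: Int_absorb1)
  have "c \<in> id ` topspace TH" by (simp add: TH_def S_def)
  then obtain v where "v \<in> arc_endpoints TH EH" "id v = c"
    using ep arc emb unfolding endpoint_of_def by blast
  then show False using cnot by simp
qed


lemma ls_agree:
  assumes "x \<in> limit_set F fs" "y \<in> limit_set F fs" "x j = y j" "i \<le> j"
  shows "x i = y i"
proof -
  have a: "fs j i (x j) = x i" using assms(1,4) unfolding limit_set_def by blast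
  have b: "fs j i (y j) = y i" using assms(2,4) unfolding limit_set_def by blast
  show ?thesis using a b assms(3) by metis
qed

lemma topspace_limit: "topspace (limit_top F fs) = limit_set F fs"
proof -
  have "limit_set F fs \<subseteq> (\<Pi>\<^sub>E n\<in>UNIV. V (F n))"
    unfolding limit_set_def PiE_UNIV_domain by auto
  then show ?thesis unfolding limit_top_def by auto
qed

lemma img_conn:
  assumes S: "gconnected TH EH S" "S \<subseteq> topspace TH"
    and cl: "\<And>C. closedin TH {a\<in>topspace TH. g a \<in> C}"
    and ed: "\<And>a b. a \<in> S \<Longrightarrow> b \<in> S \<Longrightarrow> EH a b \<Longrightarrow> Ed G (g a) (g b)"
  shows "fconnected G (g ` S)"
  unfolding fconnected_def gconnected_def
proof clarify
  fix P Q
  assume PQ: "P \<noteq> {}" "Q \<noteq> {}" "P \<inter> Q = {}" "P \<union> Q = g ` S"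
    "\<not> (\<exists>u\<in>P. \<exists>w\<in>Q. Ed G u w)"
  define P' where "P' = {a\<in>S. g a \<in> P}"
  define Q' where "Q' = {a\<in>S. g a \<in> Q}"
  have cP: "closedin (subtopology TH S) P'"
  proof -
    have "P' = {a\<in>topspace TH. g a \<in> P} \<inter> S" using S(2) unfolding P'_def by blast
    then show ?thesis unfolding closedin_subtopology using cl by blast
  qed
  have cQ: "closedin (subtopology TH S) Q'"
  proof -
    have "Q' = {a\<in>topspace TH. g a \<in> Q} \<inter> S" using S(2) unfolding Q'_def by blast
    then show ?thesis unfolding closedin_subtopology using cl by blast
  qed
  have "P' \<noteq> {}"
  proof -
    obtain p where "p \<in> P" using PQ(1) by blast
    then have "p \<in> g ` S" using PQ(4) by blast
    then obtain a where "a \<in> S" "g a = p" by blast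
    then show ?thesis using \<open>p \<in> P\<close> unfolding P'_def by blast
  qed
  moreover have "Q' \<noteq> {}"
  proof -
    obtain p where "p \<in> Q" using PQ(2) by blast
    then have "p \<in> g ` S" using PQ(4) by blast
    then obtain a where "a \<in> S" "g a = p" by blast
    then show ?thesis using \<open>p \<in> Q\<close> unfolding Q'_def by blast
  qed
  moreover have "P' \<inter> Q' = {}" using PQ(3) by (auto simp: P'_def Q'_def)
  moreover have "P' \<union> Q' = S" using PQ(4) by (auto simp: P'_def Q'_def)
  moreover have "\<not> (\<exists>u\<in>P'. \<exists>w\<in>Q'. EH u w)"
  proof clarify
    fix u w assume "u \<in> P'" "w \<in> Q'" "EH u w"
    then have "Ed G (g u) (g w)" "g u \<in> P" "g w \<in> Q" using ed unfolding P'_def Q'_def by auto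
    then show False using PQ(5) by blast
  qed
  ultimately have "\<exists>U W. U \<noteq> {} \<and> W \<noteq> {} \<and> U \<inter> W = {} \<and> U \<union> W = S \<and>
              closedin (subtopology TH S) U \<and> closedin (subtopology TH S) W \<and>
              \<not> (\<exists>u\<in>U. \<exists>w\<in>W. EH u w)"
    using cP cQ by (intro exI[of _ "P'"] exI[of _ "Q'"]) simp
  then show False using S(1) unfolding gconnected_def by blast
qed

lemma half_closed:
  assumes "closedin (subtopology TH (topspace TH - {v})) U" "closedin TH {v}"
  shows "closedin TH (U \<union> {v})"
proof -
  obtain T where T: "closedin TH T" "U = T \<inter> (topspace TH - {v})"
    using assms(1) unfolding closedin_subtopology by blast
  have eq: "U \<union> {v} = T \<union> {v}" using T closedin_subset[OF T(1)] by auto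
  have "closedin TH (T \<union> {v})" using T(1) assms(2) by (rule closedin_Un)
  then show ?thesis by (subst eq)
qed

lemma half_conn_aux:
  assumes X: "gconnected TH EH (topspace TH)" and sym: "\<And>x y. EH x y \<Longrightarrow> EH y x"
    and UW: "U \<inter> W = {}" "U \<union> W = topspace TH - {v}" "\<not> (\<exists>u\<in>U. \<exists>w\<in>W. EH u w)"
    and cU: "closedin TH (U \<union> {v})" and cW: "closedin TH (W \<union> {v})"
    and PQ: "P \<noteq> {}" "Q \<noteq> {}" "P \<inter> Q = {}" "P \<union> Q = U \<union> {v}"
      "closedin (subtopology TH (U \<union> {v})) P" "closedin (subtopology TH (U \<union> {v})) Q"
      "\<not> (\<exists>u\<in>P. \<exists>w\<in>Q. EH u w)" and vP: "v \<in> P" and v: "v \<in> topspace TH"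
  shows False
proof -
  have cP: "closedin TH P" using PQ(5) cU closedin_trans_full by blast
  have cQ: "closedin TH Q" using PQ(6) cU closedin_trans_full by blast
  have QU: "Q \<subseteq> U" using PQ vP by auto
  have "closedin TH (P \<union> W)"
  proof -
    have eq: "P \<union> W = P \<union> (W \<union> {v})" using vP by auto
    have "closedin TH (P \<union> (W \<union> {v}))" using cP cW by (rule closedin_Un)
    then show ?thesis by (subst eq)
  qed
  moreover have "P \<union> W \<noteq> {}" using vP by auto
  moreover have "(P \<union> W) \<union> Q = topspace TH" using PQ(4) UW(2) v by auto
  moreover have "(P \<union> W) \<inter> Q = {}" using PQ(3) UW(1) QU by auto
  moreover have "\<not> (\<exists>u\<in>P \<union> W. \<exists>w\<in>Q. EH u w)" using PQ(7) UW(3) QU sym by blast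
  ultimately have "\<exists>U W. U \<noteq> {} \<and> W \<noteq> {} \<and> U \<inter> W = {} \<and> U \<union> W = topspace TH \<and>
              closedin (subtopology TH (topspace TH)) U \<and> closedin (subtopology TH (topspace TH)) W \<and>
              \<not> (\<exists>u\<in>U. \<exists>w\<in>W. EH u w)"
    using PQ(2) cQ by (intro exI[of _ "P \<union> W"] exI[of _ Q]) (simp add: subtopology_topspace)
  then show False using X unfolding gconnected_def by blast
qed

lemma half_conn:
  assumes X: "gconnected TH EH (topspace TH)" and sym: "\<And>x y. EH x y \<Longrightarrow> EH y x"
    and UW: "U \<inter> W = {}" "U \<union> W = topspace TH - {v}" "\<not> (\<exists>u\<in>U. \<exists>w\<in>W. EH u w)"
    and cU: "closedin TH (U \<union> {v})" and cW: "closedin TH (W \<union> {v})" and v: "v \<in> topspace TH"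
  shows "gconnected TH EH (U \<union> {v})"
  unfolding gconnected_def
proof clarify
  fix P Q
  assume PQ: "P \<noteq> {}" "Q \<noteq> {}" "P \<inter> Q = {}" "P \<union> Q = U \<union> {v}"
      "closedin (subtopology TH (U \<union> {v})) P" "closedin (subtopology TH (U \<union> {v})) Q"
      "\<not> (\<exists>u\<in>P. \<exists>w\<in>Q. EH u w)"
  show False
  proof (cases "v \<in> P")
    case True
    then show ?thesis using half_conn_aux[OF X sym UW cU cW PQ True v] by blast
  next
    case False
    then have vQ: "v \<in> Q" using PQ by auto
    have "\<not> (\<exists>u\<in>Q. \<exists>w\<in>P. EH u w)" using PQ(7) sym by blast
    then show ?thesis using half_conn_aux[OF X sym UW cU cW PQ(2,1) _ _ PQ(6,5) _ vQ v] PQ(3,4) by blast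
  qed
qed

lemma core:
  fixes F :: "nat \<Rightarrow> 'a graph" and fs :: "nat \<Rightarrow> nat \<Rightarrow> 'a \<Rightarrow> 'a" and e :: "nat \<Rightarrow> 'a"
    and N :: nat and TH :: "'b topology" and EH :: "'b \<Rightarrow> 'b \<Rightarrow> bool" and h :: "'b \<Rightarrow> nat \<Rightarrow> 'a"
  assumes trees: "\<And>n. finite_tree (F n)"
    and Dfs: "\<And>m n. n \<le> m \<Longrightarrow> epi (F m) (F n) (fs m n) \<and> monotone_epi (F m) (F n) (fs m n)"
    and eLS: "e \<in> limit_set F fs"
    and leafs: "\<And>m a b. N \<le> m \<Longrightarrow> a \<in> V (F m) \<Longrightarrow> b \<in> V (F m) \<Longrightarrow> a \<noteq> e m \<Longrightarrow> b \<noteq> e m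
                 \<Longrightarrow> Ed (F m) (e m) a \<Longrightarrow> Ed (F m) (e m) b \<Longrightarrow> a = b"
    and arc: "is_arc TH EH" and emb: "graph_embedding TH EH (limit_top F fs) (limit_edge F fs) h"
    and v: "v \<in> topspace TH" "h v = e"
  shows "v \<in> arc_endpoints TH EH"
proof -
  let ?X = "topspace TH"
  have tg: "tgraph TH EH" using arc by (simp add: is_arc_def)
  have Xconn: "gconnected TH EH ?X" using arc by (simp add: is_arc_def)
  have sym: "\<And>x y. EH x y \<Longrightarrow> EH y x" using tg unfolding tgraph_def by blast
  have Haus: "Hausdorff_space TH" using tg unfolding tgraph_def by blast
  have cpt: "compact_space TH" using tg unfolding tgraph_def by blast
  have inj: "inj_on h ?X" using emb unfolding graph_embedding_def by blast
  have hom: "homeomorphic_map TH (subtopology (limit_top F fs) (h ` ?X)) h"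
    using emb unfolding graph_embedding_def embedding_map_def by blast
  have edg: "\<And>x y. x \<in> ?X \<Longrightarrow> y \<in> ?X \<Longrightarrow> EH x y \<Longrightarrow> limit_edge F fs (h x) (h y)"
    using emb unfolding graph_embedding_def by blast
  have cont: "continuous_map TH (limit_top F fs) h"
    using homeomorphic_imp_continuous_map[OF hom] continuous_map_in_subtopology by blast
  have hLS: "\<And>a. a \<in> ?X \<Longrightarrow> h a \<in> limit_set F fs"
    using continuous_map_image_subset_topspace[OF cont] topspace_limit by blast
  have hV: "\<And>a j. a \<in> ?X \<Longrightarrow> h a j \<in> V (F j)" using hLS unfolding limit_set_def by blast
  have contj: "continuous_map TH (top_of (F j)) (\<lambda>a. h a j)" for j
  proof -
    have "continuous_map (limit_top F fs) (top_of (F j)) (\<lambda>x. x j)"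
      unfolding limit_top_def
      by (rule continuous_map_from_subtopology) (rule continuous_map_product_projection, simp)
    then show ?thesis
      using continuous_map_compose[OF cont] by (simp add: o_def)
  qed
  have clj: "closedin TH {a \<in> ?X. h a j \<in> C}" for j C
  proof -
    have "closedin TH {a \<in> ?X. h a j \<in> C \<inter> V (F j)}"
      by (rule closedin_continuous_map_preimage[OF contj]) simp
    moreover have "{a \<in> ?X. h a j \<in> C \<inter> V (F j)} = {a \<in> ?X. h a j \<in> C}" using hV by blast
    ultimately show ?thesis by simp
  qed
  have edj: "\<And>a b j. a \<in> ?X \<Longrightarrow> b \<in> ?X \<Longrightarrow> EH a b \<Longrightarrow> Ed (F j) (h a j) (h b j)"
    using edg unfolding limit_edge_def by blast
  have v1: "closedin TH {v}" using closedin_Hausdorff_singleton[OF Haus v(1)] .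
  show ?thesis
  proof (rule ccontr)
    assume "v \<notin> arc_endpoints TH EH"
    then have "\<not> gconnected TH EH (?X - {v})" using v(1) by (simp add: arc_endpoints_def)
    then obtain U W where UW: "U \<noteq> {}" "W \<noteq> {}" "U \<inter> W = {}" "U \<union> W = ?X - {v}"
       "closedin (subtopology TH (?X - {v})) U" "closedin (subtopology TH (?X - {v})) W"
       "\<not> (\<exists>u\<in>U. \<exists>w\<in>W. EH u w)" unfolding gconnected_def by blast
    have noWU: "\<not> (\<exists>u\<in>W. \<exists>w\<in>U. EH u w)" using UW(7) sym by blast
    have WU: "W \<inter> U = {}" "W \<union> U = ?X - {v}" using UW(3,4) by auto
    have cU: "closedin TH (U \<union> {v})" using half_closed[OF UW(5) v1] .
    have cW: "closedin TH (W \<union> {v})" using half_closed[OF UW(6) v1] .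
    have connU: "gconnected TH EH (U \<union> {v})" by (rule half_conn[OF Xconn sym UW(3,4,7) cU cW v(1)])
    have connW: "gconnected TH EH (W \<union> {v})" by (rule half_conn[OF Xconn sym WU noWU cW cU v(1)])
    have UX: "U \<union> {v} \<subseteq> ?X" "W \<union> {v} \<subseteq> ?X" using UW(4) v(1) by auto
    define SU where "SU j = (\<lambda>a. h a j) ` (U \<union> {v})" for j
    define SW where "SW j = (\<lambda>a. h a j) ` (W \<union> {v})" for j
    have fcU: "fconnected (F j) (SU j)" for j unfolding SU_def
      by (rule img_conn[where g="\<lambda>a. h a j", OF connU UX(1) clj]) (use edj UX(1) in blast)
    have fcW: "fconnected (F j) (SW j)" for j unfolding SW_def
      by (rule img_conn[where g="\<lambda>a. h a j", OF connW UX(2) clj]) (use edj UX(2) in blast)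
    have SUV: "SU j \<subseteq> V (F j)" for j unfolding SU_def using hV UX(1) by blast
    have SWV: "SW j \<subseteq> V (F j)" for j unfolding SW_def using hV UX(2) by blast
    obtain u0 where u0: "u0 \<in> U" using UW(1) by blast
    obtain w0 where w0: "w0 \<in> W" using UW(2) by blast
    have u0X: "u0 \<in> ?X" "u0 \<noteq> v" using u0 UW(4) by auto
    have w0X: "w0 \<in> ?X" "w0 \<noteq> v" using w0 UW(4) by auto
    have "h u0 \<noteq> e" using inj v u0X unfolding inj_on_def by metis
    then obtain k1 where k1: "h u0 k1 \<noteq> e k1" by auto
    have "h w0 \<noteq> e" using inj v w0X unfolding inj_on_def by metis
    then obtain k2 where k2: "h w0 k2 \<noteq> e k2" by auto
    define k where "k = max N (max k1 k2)"
    have Nk: "N \<le> k" unfolding k_def by simp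
    have uk: "h u0 j \<noteq> e j" if "k \<le> j" for j
      using ls_agree[OF hLS[OF u0X(1)] eLS, of j k1] k1 that unfolding k_def by auto
    have wk: "h w0 j \<noteq> e j" if "k \<le> j" for j
      using ls_agree[OF hLS[OF w0X(1)] eLS, of j k2] k2 that unfolding k_def by auto
    have vSU: "e j \<in> SU j" for j using v(2) unfolding SU_def by force
    have vSW: "e j \<in> SW j" for j using v(2) unfolding SW_def by force
    have uSU: "h u0 j \<in> SU j" for j using u0 unfolding SU_def by blast
    have wSW: "h w0 j \<in> SW j" for j using w0 unfolding SW_def by blast
    obtain nn where nn: "nn \<in> SU k" "nn \<noteq> e k" "Ed (F k) (e k) nn"
    proof -
      have "\<exists>x\<in>{e k}. \<exists>y\<in>SU k - {e k}. Ed (F k) x y"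
        by (rule fconn_edge[OF fcU SUV]) (use vSU uSU uk[of k] in auto)
      then show ?thesis using that by blast
    qed
    have nnV: "nn \<in> V (F k)" using nn(1) SUV by blast
    have ekV: "e k \<in> V (F k)" using eLS unfolding limit_set_def by blast
    have leafk: "\<forall>z\<in>V (F k). z \<noteq> e k \<and> Ed (F k) (e k) z \<longrightarrow> z = nn"
      using leafs[OF Nk] nn nnV by blast
    define C where "C j = {a \<in> U \<union> {v}. h a k = nn \<and> h a (k + j) \<in> SW (k + j)}" for j
    have Cne: "C j \<noteq> {}" for j
    proof -
      let ?j = "k + j"
      have epj: "epi (F ?j) (F k) (fs ?j k)" "monotone_epi (F ?j) (F k) (fs ?j k)" using Dfs by auto
      have fe: "fs ?j k (e ?j) = e k" using eLS unfolding limit_set_def by auto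
      have fu: "fs ?j k (h u0 ?j) = h u0 k" using hLS[OF u0X(1)] unfolding limit_set_def by auto
      have fw: "fs ?j k (h w0 ?j) = h w0 k" using hLS[OF w0X(1)] unfolding limit_set_def by auto
      have "\<exists>q\<in>SU ?j \<inter> SW ?j. fs ?j k q = nn"
        by (rule cross[OF trees epj ekV leafk SUV fcU vSU fe uSU _ SWV fcW vSW fe wSW])
           (use fu fw uk[of k] wk[of k] in auto)
      then obtain q where q: "q \<in> SU ?j" "q \<in> SW ?j" "fs ?j k q = nn" by blast
      then obtain a where a: "a \<in> U \<union> {v}" "h a ?j = q" unfolding SU_def by blast
      have "fs ?j k (h a ?j) = h a k" using hLS a(1) UX(1) unfolding limit_set_def by auto
      then have "a \<in> C j" using a q unfolding C_def by auto
      then show ?thesis by blast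
    qed
    have Ccl: "closedin TH (C j)" for j
    proof -
      have "C j = (U \<union> {v}) \<inter> {a \<in> ?X. h a k \<in> {nn}} \<inter> {a \<in> ?X. h a (k + j) \<in> SW (k + j)}"
        unfolding C_def using UX(1) by blast
      moreover have "closedin TH ((U \<union> {v}) \<inter> {a \<in> ?X. h a k \<in> {nn}} \<inter> {a \<in> ?X. h a (k + j) \<in> SW (k + j)})"
        by (intro closedin_Int cU clj)
      ultimately show ?thesis by simp
    qed
    have Cdec: "decseq C"
    proof (rule decseq_SucI)
      fix j
      show "C (Suc j) \<subseteq> C j"
      proof
        fix a assume a: "a \<in> C (Suc j)"
        then have "h a (k + Suc j) \<in> (\<lambda>a. h a (k + Suc j)) ` (W \<union> {v})"
          unfolding C_def SW_def by blast
        then obtain b where b: "b \<in> W \<union> {v}" "h b (k + Suc j) = h a (k + Suc j)"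
          by (metis (no_types, lifting) imageE)
        have aX: "a \<in> ?X" using a UX(1) unfolding C_def by blast
        have bX: "b \<in> ?X" using b(1) UX(2) by blast
        have "h b (k + j) = h a (k + j)"
          by (rule ls_agree[OF hLS[OF bX] hLS[OF aX] b(2)]) simp
        then have "h a (k + j) \<in> SW (k + j)" using b(1) unfolding SW_def by (metis image_eqI)
        then show "a \<in> C j" using a unfolding C_def by blast
      qed
    qed
    obtain a where a: "\<And>j. a \<in> C j" using compact_space_imp_nest[OF cpt Ccl Cne Cdec] by blast
    have a0: "a \<in> U \<union> {v}" "h a k = nn" using a[of 0] unfolding C_def by auto
    have "a \<noteq> v" using a0(2) nn(2) v(2) by auto
    then have aU: "a \<in> U" using a0(1) by blast
    have aclose: "\<exists>b \<in> W \<union> {v}. h b j = h a j" if "k \<le> j" for j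
    proof -
      have "a \<in> C (j - k)" by (rule a)
      then show ?thesis using that unfolding C_def SW_def by auto
    qed
    define Op where "Op = ?X - (W \<union> {v})"
    have Oopen: "openin TH Op" unfolding Op_def by (rule openin_diff[OF openin_topspace cW])
    have aO: "a \<in> Op" unfolding Op_def using aU UW(3,4) by auto
    have OX: "Op \<subseteq> ?X" unfolding Op_def by blast
    have "openin (subtopology (limit_top F fs) (h ` ?X)) (h ` Op)"
      using homeomorphic_map_openness[OF hom OX] Oopen by blast
    then obtain Op1 where Op1: "openin (limit_top F fs) Op1" "h ` Op = Op1 \<inter> h ` ?X"
      unfolding openin_subtopology by blast
    then obtain Opp where Opp: "openin (product_topology (\<lambda>n. top_of (F n)) UNIV) Opp"
      "Op1 = Opp \<inter> limit_set F fs"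
      unfolding limit_top_def openin_subtopology by blast
    have "h a \<in> h ` Op" using aO by (rule imageI)
    then have "h a \<in> Op1" using Op1(2) by simp
    then have "h a \<in> Opp" using Opp(2) by simp
    then obtain Uc where Uc: "finite {i \<in> UNIV. Uc i \<noteq> topspace (top_of (F i))}"
      "h a \<in> Pi\<^sub>E UNIV Uc" "Pi\<^sub>E UNIV Uc \<subseteq> Opp"
      using Opp(1) unfolding openin_product_topology_alt by blast
    define J where "J = {i \<in> UNIV. Uc i \<noteq> topspace (top_of (F i))}"
    obtain m where m: "J \<subseteq> {..<m}" using finite_nat_bounded Uc(1) unfolding J_def by blast
    define j where "j = k + m"
    obtain b where b: "b \<in> W \<union> {v}" "h b j = h a j" using aclose[of j] unfolding j_def by auto
    have bX: "b \<in> ?X" using b(1) UX by blast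
    have aX: "a \<in> ?X" using aO OX by blast
    have "h b \<in> Pi\<^sub>E UNIV Uc"
      unfolding PiE_UNIV_domain
    proof
      fix i
      show "h b i \<in> Uc i"
      proof (cases "i \<in> J")
        case True
        then have "i \<le> j" using m unfolding j_def by auto
        then have "h b i = h a i" using ls_agree[OF hLS[OF bX] hLS[OF aX] b(2)] by blast
        moreover have "h a i \<in> Uc i" using Uc(2) unfolding PiE_UNIV_domain by blast
        ultimately show ?thesis by simp
      next
        case False
        then have "Uc i = V (F i)" unfolding J_def by simp
        then show ?thesis using hV[OF bX] by simp
      qed
    qed
    then have "h b \<in> Opp" using Uc(3) by (rule subsetD[rotated])
    then have "h b \<in> Op1" using Opp(2) hLS[OF bX] by simp
    moreover have "h b \<in> h ` ?X" using bX by (rule imageI)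
    ultimately have "h b \<in> h ` Op" using Op1(2) by simp
    then obtain z where z0: "h b = h z" "z \<in> Op" by (rule imageE)
    have z: "z \<in> Op" "h z = h b" using z0 by simp_all
    have zX: "z \<in> ?X" using z(1) OX by blast
    have "z = b" by (rule inj_onD[OF inj z(2) zX bX])
    then have "b \<in> Op" using z(1) by simp
    then show False using b(1) unfolding Op_def by simp
  qed
qed


theorem mainTheorem13:
  fixes Fam :: "'a graph set"
    and D :: "'a graph \<Rightarrow> 'a graph \<Rightarrow> ('a \<Rightarrow> 'a) \<Rightarrow> bool"
    and F :: "nat \<Rightarrow> 'a graph"
    and fs :: "nat \<Rightarrow> nat \<Rightarrow> 'a \<Rightarrow> 'a"
    and e :: "nat \<Rightarrow> 'a"
    and N :: nat
  assumes "proj_fraisse_family Fam D"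
    and "\<forall>G\<in>Fam. finite_tree G"
    and "\<forall>B A f. D B A f \<longrightarrow> monotone_epi B A f \<and> weakly_coherent B A f"
    and "allows_splitting_edges Fam D"
    and "fraisse_sequence Fam D F fs"
    and "e \<in> limit_set F fs"
    and "\<forall>m\<ge>N. endpoint_of TYPE('a) (top_of (F m)) (Ed (F m)) (e m)"
  shows "endpoint_of TYPE('b) (limit_top F fs) (limit_edge F fs) e"
proof -
  have FS: "(\<forall>n. F n \<in> Fam) \<and> (\<forall>m n. n \<le> m \<longrightarrow> D (F m) (F n) (fs m n))"
    using assms(5) unfolding fraisse_sequence_def by (elim conjE) (intro conjI; assumption)
  have PF: "\<forall>B A f. D B A f \<longrightarrow> B \<in> Fam \<and> A \<in> Fam \<and> epi B A f"
    using assms(1) unfolding proj_fraisse_family_def by (elim conjE) assumption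
  have Fam: "F n \<in> Fam" for n using FS by simp
  have trees: "finite_tree (F n)" for n using assms(2) Fam by simp
  have Dfs: "epi (F m) (F n) (fs m n) \<and> monotone_epi (F m) (F n) (fs m n)" if "n \<le> m" for m n
  proof -
    have d: "D (F m) (F n) (fs m n)" using FS that by simp
    have "epi (F m) (F n) (fs m n)" using PF d by blast
    moreover have "monotone_epi (F m) (F n) (fs m n)" using assms(3) d by blast
    ultimately show ?thesis by (rule conjI)
  qed
  have eV: "e m \<in> V (F m)" for m using assms(6) unfolding limit_set_def by simp
  have leafs: "a = b" if "N \<le> m" "a \<in> V (F m)" "b \<in> V (F m)" "a \<noteq> e m" "b \<noteq> e m"
      "Ed (F m) (e m) a" "Ed (F m) (e m) b" for m a b
    by (rule leaf[OF trees eV assms(7)[rule_format, OF that(1)] that(2-7)])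
  show ?thesis
    unfolding endpoint_of_def
  proof (intro conjI allI impI)
    show "e \<in> topspace (limit_top F fs)" by (simp add: topspace_limit assms(6))
  next
    fix TH :: "'b topology" and EH h
    assume H: "is_arc TH EH \<and> graph_embedding TH EH (limit_top F fs) (limit_edge F fs) h \<and> e \<in> h ` topspace TH"
    have arcH: "is_arc TH EH" using H by (rule conjunct1)
    have embH: "graph_embedding TH EH (limit_top F fs) (limit_edge F fs) h" using H by simp
    from H obtain v where v: "v \<in> topspace TH" "h v = e" by blast
    have "v \<in> arc_endpoints TH EH"
      using core[OF trees Dfs assms(6) leafs arcH embH v] .
    then show "\<exists>v\<in>arc_endpoints TH EH. h v = e" using v by blast
  qed
qed

end
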